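(* Let $n\ge 1$, $\nu>0$, and let $\alpha_u,\alpha_y\ge 0$ with $\max\{\alpha_u,\alpha_y\}>0$. Let $M\in\mathbb{R}^{n\times n}$ be diagonal with positive diagonal entries, let $L\in\mathbb{R}^{n\times n}$ with $L+L^T$ positive semidefinite, and let $\Pi_k$ be an $n\times n$ diagonal matrix with diagonal entries in $\{0,1\}$. Set $\gamma_1=\frac{\alpha_y^2\nu}{\alpha_y^2\nu+\alpha_u^2}$, $\gamma_2=\frac{\alpha_u^2}{\alpha_y^2\nu+\alpha_u^2}$, and assume $\gamma_1=\gamma_2=\tfrac12$. Define $$\mathbb{S}_k=\nu LM^{-1}L^T+M-\frac{1}{\alpha_y^2\nu+\alpha_u^2}(\alpha_y\nu LM^{-1}-\alpha_u I)\Pi_k M\Pi_k(\alpha_y\nu LM^{-1}-\alpha_u I)^T,$$ $L_1=\sqrt{\nu}L(I-\gamma_1\Pi_k)^{1/2}+(I-\gamma_2\Pi_k)^{1/2}M$ and $\widehat{\mathbb{S}}_k=L_1M^{-1}L_1^T$. Then every eigenvalue $\lambda$ of the pencil $(\mathbb{S}_k,\widehat{\mathbb{S}}_k)$ (i.e. $\mathbb{S}_kx=\lambda\widehat{\mathbb{S}}_kx$ for some $x\ne0$) satisfies $\lambda\in\left[\tfrac12,\,3\right]$.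
   Context: Square roots of nonnegative diagonal matrices are taken entrywise. *)

theory Defs
  imports "HOL-Analysis.Analysis"
begin

definition diagonal_mat :: "real^'n^'n \<Rightarrow> bool" where
  "diagonal_mat A \<longleftrightarrow> (\<forall>i j. i \<noteq> j \<longrightarrow> A $ i $ j = 0)"

definition psd_mat :: "real^'n^'n \<Rightarrow> bool" where
  "psd_mat A \<longleftrightarrow> (\<forall>x. 0 \<le> x \<bullet> (A *v x))"

definition diag_sqrt :: "real^'n^'n \<Rightarrow> real^'n^'n" where
  "diag_sqrt A = (\<chi> i j. if i = j then sqrt (A $ i $ i) else 0)"

end

theory Submission
  imports Defs
begin


lemma diag_entry: "diagonal_mat D \<Longrightarrow> D $ i $ j = (if i = j then D $ i $ i else 0)"
  unfolding diagonal_mat_def by auto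

lemma diag_off: "diagonal_mat D \<Longrightarrow> i \<noteq> j \<Longrightarrow> D $ i $ j = 0"
  unfolding diagonal_mat_def by auto

lemma diag_mv: "diagonal_mat D \<Longrightarrow> (D *v y) $ i = D $ i $ i * y $ i"
proof -
  assume d: "diagonal_mat D"
  have "(D *v y) $ i = (\<Sum>j\<in>UNIV. D $ i $ j * y $ j)" by (simp add: matrix_vector_mult_def)
  also have "\<dots> = (\<Sum>j\<in>UNIV. if j = i then D $ i $ i * y $ j else 0)"
    by (rule sum.cong) (auto simp: diag_off[OF d])
  also have "\<dots> = D $ i $ i * y $ i" by simp
  finally show ?thesis .
qed

lemma diag_transpose: "diagonal_mat D \<Longrightarrow> transpose D = D"
proof -
  assume d: "diagonal_mat D"
  show ?thesis
  proof (simp add: vec_eq_iff transpose_def, intro allI)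
    fix i j
    show "D $ j $ i = D $ i $ j" using diag_off[OF d, of i j] diag_off[OF d, of j i] by (cases "i = j") auto
  qed
qed

lemma diag_mult: assumes "diagonal_mat D" "diagonal_mat E"
  shows "diagonal_mat (D ** E)" "(D ** E) $ i $ i = D $ i $ i * E $ i $ i"
proof -
  have e: "(D ** E) $ i $ j = (if i = j then D $ i $ i * E $ i $ i else 0)" for i j
  proof -
    have "(D ** E) $ i $ j = (\<Sum>k\<in>UNIV. D $ i $ k * E $ k $ j)" by (simp add: matrix_matrix_mult_def)
    also have "\<dots> = (\<Sum>k\<in>UNIV. if k = i then (if i = j then D $ i $ i * E $ i $ i else 0) else 0)"
      by (rule sum.cong) (auto simp: diag_off[OF assms(1)] diag_off[OF assms(2)])
    also have "\<dots> = (if i = j then D $ i $ i * E $ i $ i else 0)" by simp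
    finally show ?thesis .
  qed
  show "diagonal_mat (D ** E)" unfolding diagonal_mat_def using e by simp
  show "(D ** E) $ i $ i = D $ i $ i * E $ i $ i" using e by simp
qed

lemma inner_diag: "diagonal_mat D \<Longrightarrow> y \<bullet> (D *v y) = (\<Sum>i\<in>UNIV. D $ i $ i * (y $ i)^2)"
  by (simp add: inner_vec_def diag_mv power2_eq_square mult_ac)

lemma quad: assumes "diagonal_mat D"
  shows "x \<bullet> ((A ** D ** transpose A) *v x) = (\<Sum>i\<in>UNIV. D $ i $ i * ((transpose A *v x) $ i)^2)"
proof -
  have "x \<bullet> ((A ** D ** transpose A) *v x) = x \<bullet> (A *v (D *v (transpose A *v x)))"
    by (simp only: matrix_vector_mul_assoc matrix_mul_assoc)
  also have "\<dots> = (transpose A *v x) \<bullet> (D *v (transpose A *v x))"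
    by (metis dot_lmul_matrix transpose_matrix_vector)
  finally show ?thesis using inner_diag[OF assms] by simp
qed

lemma diag_inv: fixes M :: "real^'n^'n"
  assumes "diagonal_mat M" "\<forall>i. M $ i $ i > 0"
  shows "matrix_inv M = (\<chi> i j. if i = j then 1 / M $ i $ i else 0)"
proof -
  define Mi :: "real^'n^'n" where "Mi = (\<chi> i j. if i = j then 1 / M $ i $ i else 0)"
  have dMi: "diagonal_mat Mi" unfolding Mi_def diagonal_mat_def by simp
  have "diagonal_mat (mat 1 :: real^'n^'n)" unfolding diagonal_mat_def by (simp add: mat_def)
  have eq1: "D = mat 1" if "diagonal_mat D" "\<forall>i. D $ i $ i = 1" for D :: "real^'n^'n"
    using that unfolding diagonal_mat_def by (simp add: vec_eq_iff mat_def)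
  have r: "M ** Mi = mat 1" "Mi ** M = mat 1"
  proof -
    have mi: "Mi $ i $ i = 1 / M $ i $ i" for i unfolding Mi_def by simp
    show "M ** Mi = mat 1"
      by (rule eq1) (use assms dMi diag_mult[of M Mi] mi in \<open>auto simp: less_imp_neq[symmetric]\<close>)
    show "Mi ** M = mat 1"
      by (rule eq1) (use assms dMi diag_mult[of Mi M] mi in \<open>auto simp: less_imp_neq[symmetric]\<close>)
  qed
  define X where "X = matrix_inv M"
  have X: "M ** X = mat 1 \<and> X ** M = mat 1"
    unfolding X_def matrix_inv_def by (rule someI[of _ Mi]) (use r in simp)
  have "X = X ** (M ** Mi)" using r by simp
  also have "\<dots> = (X ** M) ** Mi" by (simp add: matrix_mul_assoc)
  also have "\<dots> = Mi" using X by simp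
  finally show ?thesis unfolding X_def Mi_def .
qed


lemma coord:
  fixes nu au ay mu p v x :: real
  assumes nu: "nu > 0" and au: "au > 0" and ay: "ay \<ge> 0" and e: "ay^2 * nu = au^2"
    and mu: "mu > 0" and p: "p = 0 \<or> p = 1"
  defines "T \<equiv> nu * (v^2 / mu) + mu * x^2 - (1 / (ay^2 * nu + au^2)) * (p * mu * p * (ay * nu * (v / mu) - au * x)^2)"
    and "R \<equiv> (sqrt nu * (sqrt (1 - 1/2 * p) * v) + mu * (sqrt (1 - 1/2*p) * x))^2 / mu"
  shows "R \<le> 2 * T" "T \<le> 3 * R - 4 * (sqrt nu * (x * v))" "sqrt nu * (x * v) + mu * x^2 / 2 \<le> R"
proof -
  define s where "s = sqrt nu"
  have s0: "s > 0" using nu s_def by simp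
  have nus: "nu = s^2" using nu s_def by simp
  have "(ay * s)^2 = au^2" using e nus by (simp add: power_mult_distrib)
  hence ays: "ay * s = au" using ay s0 au
    by (metis less_imp_le mult_nonneg_nonneg power2_eq_iff_nonneg)
  have ayn: "ay * nu = au * s" using ays nus by (simp add: power2_eq_square)
  have D: "ay^2 * nu + au^2 = 2 * au^2" using e by simp
  define a where "a = s * v"
  define b where "b = mu * x"
  have xv: "s * (x * v) = a * b / mu" using mu by (simp add: a_def b_def)
  have muT: "mu * T = a^2 + b^2 - p/2 * (a - b)^2"
  proof -
    have T2: "T = nu * (v^2 / mu) + mu * x^2 - (1 / (2*au^2)) * (p * mu * p * (au * s * (v / mu) - au * x)^2)"
      unfolding T_def D ayn by simp
    have "mu * T = s^2 * v^2 + mu^2 * x^2 - mu * (1 / (2*au^2)) * (p * mu * p * (au * s * (v / mu) - au * x)^2)"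
      unfolding T2 nus using mu by (simp add: field_simps power2_eq_square)
    also have "\<dots> = a^2 + b^2 - p/2 * (a - b)^2"
      using p mu au unfolding a_def b_def by (auto simp: field_simps power2_eq_square)
    finally show ?thesis .
  qed
  have muR: "mu * R = (1 - p/2) * (a + b)^2"
  proof -
    have q: "sqrt (1 - 1/2 * p) ^2 = 1 - p/2" using p by auto
    have "mu * R = (sqrt (1 - 1/2 * p))^2 * (a+b)^2"
      unfolding R_def a_def b_def s_def using mu by (simp add: field_simps power2_eq_square)
    thus ?thesis using q by simp
  qed
  have ab: "mu * (s * (x * v)) = a * b" using xv mu by simp
  have bb: "mu * (mu * x^2 / 2) = b^2 / 2" unfolding b_def by (simp add: power2_eq_square)
  have d1: "mu * (2 * T) - mu * R \<ge> 0"
  proof (cases "p = 0")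
    case True
    have "mu * (2 * T) - mu * R = 2 * (mu * T) - mu * R" by (simp add: algebra_simps)
    also have "\<dots> = (a - b)^2" unfolding muT muR True by (simp add: power2_eq_square algebra_simps)
    finally have "mu * (2 * T) - mu * R = (a - b)^2" .
    thus ?thesis using zero_le_power2[of a] zero_le_power2[of b] zero_le_power2[of "a+b"] zero_le_power2[of "a-b"] zero_le_power2[of "a+b/2"] by linarith
  next
    case False
    hence "p = 1" using p by simp
    have "mu * (2 * T) - mu * R = 2 * (mu * T) - mu * R" by (simp add: algebra_simps)
    also have "\<dots> = (a + b)^2 / 2" unfolding muT muR \<open>p = 1\<close> by (simp add: power2_eq_square algebra_simps)
    finally have "mu * (2 * T) - mu * R = (a + b)^2 / 2" .
    thus ?thesis using zero_le_power2[of a] zero_le_power2[of b] zero_le_power2[of "a+b"] zero_le_power2[of "a-b"] zero_le_power2[of "a+b/2"] by linarith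
  qed
  have d2: "mu * (3 * R - 4 * (s * (x * v))) - mu * T \<ge> 0"
  proof (cases "p = 0")
    case True
    have "mu * (3 * R - 4 * (s * (x * v))) - mu * T = 3 * (mu * R) - 4 * (mu * (s * (x * v))) - mu * T" by (simp add: algebra_simps)
    also have "\<dots> = a^2 + b^2 + (a + b)^2" unfolding muT muR ab True by (simp add: power2_eq_square algebra_simps)
    finally have "mu * (3 * R - 4 * (s * (x * v))) - mu * T = a^2 + b^2 + (a + b)^2" .
    thus ?thesis using zero_le_power2[of a] zero_le_power2[of b] zero_le_power2[of "a+b"] zero_le_power2[of "a-b"] zero_le_power2[of "a+b/2"] by linarith
  next
    case False
    hence "p = 1" using p by simp
    have "mu * (3 * R - 4 * (s * (x * v))) - mu * T = 3 * (mu * R) - 4 * (mu * (s * (x * v))) - mu * T" by (simp add: algebra_simps)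
    also have "\<dots> = (a - b)^2" unfolding muT muR ab \<open>p = 1\<close> by (simp add: power2_eq_square algebra_simps)
    finally have "mu * (3 * R - 4 * (s * (x * v))) - mu * T = (a - b)^2" .
    thus ?thesis using zero_le_power2[of a] zero_le_power2[of b] zero_le_power2[of "a+b"] zero_le_power2[of "a-b"] zero_le_power2[of "a+b/2"] by linarith
  qed
  have d3: "mu * R - mu * (s * (x * v) + mu * x^2 / 2) \<ge> 0"
  proof (cases "p = 0")
    case True
    have "mu * R - mu * (s * (x * v) + mu * x^2 / 2) = mu * R - mu * (s * (x * v)) - mu * (mu * x^2 / 2)" by (simp add: algebra_simps)
    also have "\<dots> = (a + b/2)^2 + b^2/4" unfolding muR ab bb True by (simp add: power2_eq_square algebra_simps)
    finally have "mu * R - mu * (s * (x * v) + mu * x^2 / 2) = (a + b/2)^2 + b^2/4" .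
    thus ?thesis using zero_le_power2[of a] zero_le_power2[of b] zero_le_power2[of "a+b"] zero_le_power2[of "a-b"] zero_le_power2[of "a+b/2"] by linarith
  next
    case False
    hence "p = 1" using p by simp
    have "mu * R - mu * (s * (x * v) + mu * x^2 / 2) = mu * R - mu * (s * (x * v)) - mu * (mu * x^2 / 2)" by (simp add: algebra_simps)
    also have "\<dots> = a^2/2" unfolding muR ab bb \<open>p = 1\<close> by (simp add: power2_eq_square algebra_simps)
    finally have "mu * R - mu * (s * (x * v) + mu * x^2 / 2) = a^2/2" .
    thus ?thesis using zero_le_power2[of a] zero_le_power2[of b] zero_le_power2[of "a+b"] zero_le_power2[of "a-b"] zero_le_power2[of "a+b/2"] by linarith
  qed
  show "R \<le> 2 * T" using d1 mu by (simp add: right_diff_distrib[symmetric] mult_le_cancel_left_pos zero_le_mult_iff)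
  show "T \<le> 3 * R - 4 * (sqrt nu * (x * v))" using d2 mu unfolding s_def[symmetric]
    by (simp add: right_diff_distrib[symmetric] zero_le_mult_iff)
  show "sqrt nu * (x * v) + mu * x^2 / 2 \<le> R" using d3 mu unfolding s_def[symmetric]
    by (simp add: right_diff_distrib[symmetric] zero_le_mult_iff)
qed

lemma transpose_diff_m: "transpose (A - B) = transpose A - (transpose B :: real^'n^'m)"
  by (simp add: transpose_def vec_eq_iff)
lemma transpose_add_m: "transpose (A + B) = transpose A + (transpose B :: real^'n^'m)"
  by (simp add: transpose_def vec_eq_iff)

theorem proposition4p6:
  fixes nu au ay lam :: real
    and S Shat L1 :: "real^'n^'n"
    and M L P :: "real^'n^'n"
    and x :: "real^'n"
  assumes "nu > 0" and "au \<ge> 0" and "ay \<ge> 0" and "max au ay > 0"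
    and "diagonal_mat M" and "\<forall>i. M $ i $ i > 0"
    and "psd_mat (L + transpose L)"
    and "diagonal_mat P" and "\<forall>i. P $ i $ i = 0 \<or> P $ i $ i = 1"
    and "ay\<^sup>2 * nu / (ay\<^sup>2 * nu + au\<^sup>2) = 1/2"
    and "au\<^sup>2 / (ay\<^sup>2 * nu + au\<^sup>2) = 1/2"
    and "x \<noteq> 0"
    and "S *v x = lam *\<^sub>R (Shat *v x)"
    and "S = nu *\<^sub>R (L ** matrix_inv M ** transpose L) + M
           - (1 / (ay\<^sup>2 * nu + au\<^sup>2)) *\<^sub>R
             (((ay * nu) *\<^sub>R (L ** matrix_inv M) - au *\<^sub>R mat 1) ** P ** M ** P
             ** transpose ((ay * nu) *\<^sub>R (L ** matrix_inv M) - au *\<^sub>R mat 1))"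
    and "L1 = sqrt nu *\<^sub>R (L ** diag_sqrt (mat 1 - (ay\<^sup>2 * nu / (ay\<^sup>2 * nu + au\<^sup>2)) *\<^sub>R P))
           + diag_sqrt (mat 1 - (au\<^sup>2 / (ay\<^sup>2 * nu + au\<^sup>2)) *\<^sub>R P) ** M"
    and "Shat = L1 ** matrix_inv M ** transpose L1"
  shows "1/2 \<le> lam \<and> lam \<le> 3"
proof -
  note nu = assms(1) and dM = assms(5) and Mpos = assms(6) and dP = assms(8) and P01 = assms(9)
  define Dn where "Dn = ay\<^sup>2 * nu + au\<^sup>2"
  have Dn0: "Dn \<noteq> 0" using assms(11) unfolding Dn_def by auto
  have au0: "au \<noteq> 0" using assms(11) by auto
  hence au: "au > 0" using assms(2) by simp
  have e: "ay^2 * nu = au^2"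
    using assms(10,11) Dn0 unfolding Dn_def[symmetric] by (simp add: field_simps)
  define Mi where "Mi = matrix_inv M"
  have Mi: "Mi = (\<chi> i j. if i = j then 1 / M $ i $ i else 0)" unfolding Mi_def using diag_inv[OF dM Mpos] .
  have dMi: "diagonal_mat Mi" unfolding Mi diagonal_mat_def by simp
  have Mii: "Mi $ i $ i = 1 / M $ i $ i" for i unfolding Mi by simp
  define v where "v = transpose L *v x"
  define K where "K = (ay * nu) *\<^sub>R (L ** Mi) - au *\<^sub>R mat 1"
  have tK: "transpose K = (ay * nu) *\<^sub>R (Mi ** transpose L) - au *\<^sub>R mat 1"
    unfolding K_def by (simp add: transpose_diff_m transpose_scalar matrix_transpose_mul diag_transpose[OF dMi])
  define w where "w = transpose K *v x"
  have w: "w = (ay * nu) *\<^sub>R (Mi *v v) - au *\<^sub>R x"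
    unfolding w_def tK v_def
    by (simp del: transpose_matrix_vector add: matrix_vector_mult_diff_rdistrib scaleR_matrix_vector_assoc[symmetric] matrix_vector_mul_assoc[symmetric])
  have wi: "w $ i = ay * nu * (v $ i / M $ i $ i) - au * x $ i" for i
    unfolding w by (simp add: diag_mv[OF dMi] Mii)
  define PMP where "PMP = P ** M ** P"
  have dPMP: "diagonal_mat PMP" unfolding PMP_def by (intro diag_mult dP dM)
  have PMPi: "PMP $ i $ i = P $ i $ i * M $ i $ i * P $ i $ i" for i
    unfolding PMP_def by (simp add: diag_mult dP dM)
  have S2: "S = nu *\<^sub>R (L ** Mi ** transpose L) + M - (1 / Dn) *\<^sub>R (K ** PMP ** transpose K)"
    unfolding assms(14) Mi_def[symmetric] K_def[symmetric] Dn_def[symmetric] PMP_def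
    by (simp add: matrix_mul_assoc)
  define sT where "sT = (\<Sum>i\<in>UNIV. nu * ((v $ i)^2 / M $ i $ i) + M $ i $ i * (x $ i)^2
      - (1 / (ay^2 * nu + au^2)) * (P $ i $ i * M $ i $ i * P $ i $ i * (ay * nu * (v $ i / M $ i $ i) - au * x $ i)^2))"
  have xSx: "x \<bullet> (S *v x) = sT"
  proof -
    have "x \<bullet> (S *v x) = nu * (x \<bullet> ((L ** Mi ** transpose L) *v x)) + x \<bullet> (M *v x)
         - (1 / Dn) * (x \<bullet> ((K ** PMP ** transpose K) *v x))"
      unfolding S2 by (simp add: matrix_vector_mult_add_rdistrib matrix_vector_mult_diff_rdistrib
          scaleR_matrix_vector_assoc[symmetric] inner_add_right inner_diff_right del: transpose_matrix_vector)
    also have "\<dots> = nu * (\<Sum>i\<in>UNIV. Mi $ i $ i * (v $ i)^2) + (\<Sum>i\<in>UNIV. M $ i $ i * (x $ i)^2)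
         - (1 / Dn) * (\<Sum>i\<in>UNIV. PMP $ i $ i * (w $ i)^2)"
      unfolding quad[OF dMi] quad[OF dPMP] inner_diag[OF dM] v_def w_def by simp
    also have "\<dots> = sT"
      unfolding sT_def Dn_def[symmetric] Mii PMPi wi
      by (simp add: sum_distrib_left sum_subtractf sum.distrib field_simps)
    finally show ?thesis .
  qed
  define Q where "Q = diag_sqrt (mat 1 - (1/2::real) *\<^sub>R P)"
  have dQ: "diagonal_mat Q" unfolding Q_def diag_sqrt_def diagonal_mat_def by simp
  have Qi: "Q $ i $ i = sqrt (1 - 1/2 * P $ i $ i)" for i unfolding Q_def diag_sqrt_def by (simp add: mat_def)
  have L1: "L1 = sqrt nu *\<^sub>R (L ** Q) + Q ** M" unfolding assms(15) assms(10) assms(11) Q_def by simp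
  have tL1: "transpose L1 = sqrt nu *\<^sub>R (Q ** transpose L) + M ** Q"
    unfolding L1 by (simp add: transpose_add_m transpose_scalar matrix_transpose_mul diag_transpose[OF dQ] diag_transpose[OF dM])
  define y where "y = transpose L1 *v x"
  have y: "y = sqrt nu *\<^sub>R (Q *v v) + M *v (Q *v x)"
    unfolding y_def tL1 v_def
    by (simp del: transpose_matrix_vector add: matrix_vector_mult_add_rdistrib scaleR_matrix_vector_assoc[symmetric] matrix_vector_mul_assoc[symmetric])
  have yi: "y $ i = sqrt nu * (sqrt (1 - 1/2 * P $ i $ i) * v $ i) + M $ i $ i * (sqrt (1 - 1/2 * P $ i $ i) * x $ i)" for i
    unfolding y by (simp add: diag_mv[OF dQ] diag_mv[OF dM] Qi)
  define sR where "sR = (\<Sum>i\<in>UNIV. (sqrt nu * (sqrt (1 - 1/2 * P $ i $ i) * v $ i) + M $ i $ i * (sqrt (1 - 1/2 * P $ i $ i) * x $ i))^2 / M $ i $ i)"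
  have xRx: "x \<bullet> (Shat *v x) = sR"
  proof -
    have "x \<bullet> (Shat *v x) = (\<Sum>i\<in>UNIV. Mi $ i $ i * (y $ i)^2)"
      unfolding assms(16) Mi_def[symmetric] quad[OF dMi] y_def by simp
    also have "\<dots> = sR" unfolding sR_def Mii yi by simp
    finally show ?thesis .
  qed
  have xv: "0 \<le> (\<Sum>i\<in>UNIV. x $ i * v $ i)"
  proof -
    have "0 \<le> x \<bullet> ((L + transpose L) *v x)" using assms(7) unfolding psd_mat_def by blast
    also have "\<dots> = x \<bullet> (L *v x) + x \<bullet> v"
      unfolding v_def by (simp add: matrix_vector_mult_add_rdistrib inner_add_right del: transpose_matrix_vector)
    also have "x \<bullet> (L *v x) = x \<bullet> v"
      unfolding v_def by (metis dot_lmul_matrix transpose_matrix_vector inner_commute)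
    finally have "0 \<le> x \<bullet> v" by simp
    thus ?thesis by (simp add: inner_vec_def)
  qed
  note cd = coord[OF nu au assms(3) e Mpos[rule_format] P01[rule_format]]
  have c1: "sR \<le> 2 * sT" unfolding sR_def sT_def sum_distrib_left by (rule sum_mono) (rule cd(1))
  have c2: "sT \<le> 3 * sR - 4 * (sqrt nu * (\<Sum>i\<in>UNIV. x $ i * v $ i))"
    unfolding sR_def sT_def sum_distrib_left sum_subtractf[symmetric] by (rule sum_mono) (rule cd(2))
  have c3: "sqrt nu * (\<Sum>i\<in>UNIV. x $ i * v $ i) + (\<Sum>i\<in>UNIV. M $ i $ i * (x $ i)^2 / 2) \<le> sR"
    unfolding sR_def sum_distrib_left sum.distrib[symmetric] by (rule sum_mono) (rule cd(3))
  obtain j where j: "x $ j \<noteq> 0" using assms(12) by (metis vec_eq_iff zero_index)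
  have "0 < (\<Sum>i\<in>UNIV. M $ i $ i * (x $ i)^2 / 2)"
    by (rule sum_pos2[where i=j]) (use j less_imp_le[OF Mpos[rule_format]] Mpos in \<open>auto intro!: mult_nonneg_nonneg\<close>)
  moreover have "0 \<le> sqrt nu * (\<Sum>i\<in>UNIV. x $ i * v $ i)" using xv nu by simp
  ultimately have sRpos: "sR > 0" using c3 by linarith
  have eig: "sT = lam * sR"
    using arg_cong[OF assms(13), of "\<lambda>z. x \<bullet> z"] xSx xRx by simp
  have "sR \<le> 2 * lam * sR" using c1 eig by simp
  hence l1: "1/2 \<le> lam" using sRpos by (simp add: mult_le_cancel_right1 field_simps)
  have "lam * sR \<le> 3 * sR" using c2 eig xv nu
    by (smt (verit) mult_nonneg_nonneg real_sqrt_ge_zero)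
  hence l2: "lam \<le> 3" using sRpos by simp
  show ?thesis using l1 l2 by simp
qed
end
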